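(* Let $G$ be a group containing a non-abelian torsion-free nilpotent subgroup. Then for no integer $N\geq 1$ is there an injective algebra morphism $\mathbb{Z}[G]\to M_N(\mathbb{C})$.
   Context: $\mathbb{Z}[G]$ is the integral group ring of $G$ and $M_N(\mathbb{C})$ the algebra of complex $N\times N$ matrices. *)

theory Defs
  imports "HOL-Algebra.Algebra" "Jordan_Normal_Form.Matrix"
begin

definition comm_subgroup :: "('a, 'b) monoid_scheme \<Rightarrow> 'a set \<Rightarrow> 'a set \<Rightarrow> 'a set" where
  "comm_subgroup G A B =
     generate G {x \<otimes>\<^bsub>G\<^esub> y \<otimes>\<^bsub>G\<^esub> inv\<^bsub>G\<^esub> x \<otimes>\<^bsub>G\<^esub> inv\<^bsub>G\<^esub> y | x y. x \<in> A \<and> y \<in> B}"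

fun lower_central :: "('a, 'b) monoid_scheme \<Rightarrow> 'a set \<Rightarrow> nat \<Rightarrow> 'a set" where
  "lower_central G H 0 = H"
| "lower_central G H (Suc i) = comm_subgroup G H (lower_central G H i)"

definition nilpotent_subgroup :: "('a, 'b) monoid_scheme \<Rightarrow> 'a set \<Rightarrow> bool" where
  "nilpotent_subgroup G H \<longleftrightarrow> subgroup H G \<and> (\<exists>n. lower_central G H n = {\<one>\<^bsub>G\<^esub>})"

definition torsion_free_subgroup :: "('a, 'b) monoid_scheme \<Rightarrow> 'a set \<Rightarrow> bool" where
  "torsion_free_subgroup G H \<longleftrightarrow>
     (\<forall>x\<in>H. \<forall>n::nat. n > 0 \<longrightarrow> x [^]\<^bsub>G\<^esub> n = \<one>\<^bsub>G\<^esub> \<longrightarrow> x = \<one>\<^bsub>G\<^esub>)"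

definition abelian_subset :: "('a, 'b) monoid_scheme \<Rightarrow> 'a set \<Rightarrow> bool" where
  "abelian_subset G H \<longleftrightarrow> (\<forall>x\<in>H. \<forall>y\<in>H. x \<otimes>\<^bsub>G\<^esub> y = y \<otimes>\<^bsub>G\<^esub> x)"

definition grp_ring_carrier :: "('a, 'b) monoid_scheme \<Rightarrow> ('a \<Rightarrow> int) set" where
  "grp_ring_carrier G =
     {f. finite {g. f g \<noteq> 0} \<and> (\<forall>g. g \<notin> carrier G \<longrightarrow> f g = 0)}"

definition grp_ring_add :: "('a \<Rightarrow> int) \<Rightarrow> ('a \<Rightarrow> int) \<Rightarrow> ('a \<Rightarrow> int)" where
  "grp_ring_add f h = (\<lambda>x. f x + h x)"

definition grp_ring_mult :: "('a, 'b) monoid_scheme \<Rightarrow> ('a \<Rightarrow> int) \<Rightarrow> ('a \<Rightarrow> int) \<Rightarrow> ('a \<Rightarrow> int)" where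
  "grp_ring_mult G f h =
     (\<lambda>x. if x \<in> carrier G
          then (\<Sum>g\<in>{g. f g \<noteq> 0}. f g * h (inv\<^bsub>G\<^esub> g \<otimes>\<^bsub>G\<^esub> x)) else 0)"

definition grp_ring_one :: "('a, 'b) monoid_scheme \<Rightarrow> ('a \<Rightarrow> int)" where
  "grp_ring_one G = (\<lambda>x. if x = \<one>\<^bsub>G\<^esub> then 1 else 0)"

text \<open>An (injective) algebra morphism Z[G] -> M_N(C). Z-linearity follows from additivity.\<close>
definition grp_ring_mat_morphism ::
  "('a, 'b) monoid_scheme \<Rightarrow> nat \<Rightarrow> (('a \<Rightarrow> int) \<Rightarrow> complex mat) \<Rightarrow> bool" where
  "grp_ring_mat_morphism G N \<phi> \<longleftrightarrow>
     (\<forall>f\<in>grp_ring_carrier G. \<phi> f \<in> carrier_mat N N)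
   \<and> (\<forall>f\<in>grp_ring_carrier G. \<forall>h\<in>grp_ring_carrier G.
        \<phi> (grp_ring_add f h) = \<phi> f + \<phi> h)
   \<and> (\<forall>f\<in>grp_ring_carrier G. \<forall>h\<in>grp_ring_carrier G.
        \<phi> (grp_ring_mult G f h) = \<phi> f * \<phi> h)
   \<and> \<phi> (grp_ring_one G) = 1\<^sub>m N"

end

theory Submission
  imports Defs "Jordan_Normal_Form.Schur_Decomposition" "Jordan_Normal_Form.Jordan_Normal_Form_Uniqueness"
begin


fun prd :: "(nat \<Rightarrow> 'a::comm_ring_1 mat) \<Rightarrow> nat \<Rightarrow> nat \<Rightarrow> 'a mat" where
  "prd f n 0 = 1\<^sub>m n"
| "prd f n (Suc k) = f k * prd f n k"

lemma prd_carrier: "(\<And>k. f k \<in> carrier_mat n n) \<Longrightarrow> prd f n k \<in> carrier_mat n n"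
  by (induct k) (auto intro: mult_carrier_mat[of _ n n])

lemma prd_tri_rows:
  assumes f: "\<And>k. f k \<in> carrier_mat n n" and ut: "\<And>k. upper_triangular (f k)"
   and dz: "\<And>k. k < n \<Longrightarrow> f k $$ (n - Suc k, n - Suc k) = 0"
  shows "k \<le> n \<Longrightarrow> i < n \<Longrightarrow> j < n \<Longrightarrow> n - k \<le> i \<Longrightarrow> prd f n k $$ (i,j) = 0"
proof (induct k arbitrary: i j)
  case 0 then show ?case by simp
next
  case (Suc k)
  have fk: "f k \<in> carrier_mat n n" by (rule f)
  have pk: "prd f n k \<in> carrier_mat n n" using prd_carrier f by blast
  have "prd f n (Suc k) $$ (i,j) = (\<Sum>l\<in>{0..<n}. f k $$ (i,l) * prd f n k $$ (l,j))"
    using fk pk Suc.prems by (simp add: scalar_prod_def)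
  also have "\<dots> = 0"
  proof (rule sum.neutral, intro ballI)
    fix l assume l: "l \<in> {0..<n}"
    show "f k $$ (i,l) * prd f n k $$ (l,j) = 0"
    proof (cases "l < i")
      case True
      then have "f k $$ (i,l) = 0" using ut[of k] fk Suc.prems by (auto intro: upper_triangularD)
      then show ?thesis by simp
    next
      case False
      show ?thesis
      proof (cases "n - k \<le> l")
        case True
        then have "prd f n k $$ (l,j) = 0" using Suc l by auto
        then show ?thesis by simp
      next
        case False2: False
        then have "l = i" "i = n - Suc k" using False Suc.prems by auto
        then have "f k $$ (i,l) = 0" using dz[of k] Suc.prems by auto
        then show ?thesis by simp
      qed
    qed
  qed
  finally show ?case .
qed

lemma prd_tri_zero:
  assumes f: "\<And>k. f k \<in> carrier_mat n n" and ut: "\<And>k. upper_triangular (f k)"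
   and dz: "\<And>k. k < n \<Longrightarrow> f k $$ (n - Suc k, n - Suc k) = 0"
  shows "prd f n n = 0\<^sub>m n n"
  by (rule eq_matI, insert prd_tri_rows[OF f ut dz, of n] prd_carrier[of f n n, OF f], auto)

lemma prd_similar:
  assumes "\<And>k. similar_mat_wit (f k) (g k) P Q" and f: "\<And>k. f k \<in> carrier_mat n n"
   and g: "\<And>k. g k \<in> carrier_mat n n" and P: "P \<in> carrier_mat n n" and Q: "Q \<in> carrier_mat n n"
   and PQ: "P * Q = 1\<^sub>m n" and QP: "Q * P = 1\<^sub>m n"
  shows "prd f n k = P * prd g n k * Q"
proof (induct k)
  case 0 then show ?case using P Q PQ by simp
next
  case (Suc k)
  have fk: "f k = P * g k * Q" using similar_mat_witD2(3)[OF f assms(1)] by blast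
  have pg: "prd g n k \<in> carrier_mat n n" using prd_carrier g by blast
  have gk: "g k \<in> carrier_mat n n" by (rule g)
  have "prd f n (Suc k) = (P * g k * Q) * (P * prd g n k * Q)" using Suc fk by simp
  also have "\<dots> = P * g k * (Q * P) * prd g n k * Q"
    using P Q pg gk by (simp add: assoc_mult_mat[of _ n n _ n _ n])
  also have "\<dots> = P * (g k * prd g n k) * Q"
    using P Q pg gk QP by (simp add: assoc_mult_mat[of _ n n _ n _ n])
  finally show ?case by simp
qed

lemma char_matrix_ut:
  assumes "T \<in> carrier_mat n n" "upper_triangular T"
  shows "upper_triangular (char_matrix T e)" "i < n \<Longrightarrow> char_matrix T e $$ (i,i) = T $$ (i,i) - e"
  using assms by (auto simp: char_matrix_def upper_triangular_def)

lemma comm_char_matrix: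
  assumes A: "A \<in> carrier_mat n n" and B: "B \<in> carrier_mat n n" and AB: "A * B = B * A"
  shows "A * char_matrix B e = char_matrix B e * A"
proof -
  have "A * char_matrix B e = A * B + A * ((-e) \<cdot>\<^sub>m 1\<^sub>m n)"
    unfolding char_matrix_def using A B by (simp add: mult_add_distrib_mat[of _ n n])
  also have "\<dots> = B * A + (-e) \<cdot>\<^sub>m A" using A AB by (simp add: mult_smult_distrib[of _ n n _ n])
  also have "\<dots> = char_matrix B e * A"
    unfolding char_matrix_def using A B by (simp add: add_mult_distrib_mat[of _ n n] mult_smult_assoc_mat[of _ n n _ n])
  finally show ?thesis .
qed

lemma comm_prd:
  assumes A: "A \<in> carrier_mat n n" and f: "\<And>k. f k \<in> carrier_mat n n"
    and c: "\<And>k. A * f k = f k * A"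
  shows "A * prd f n k = prd f n k * A"
proof (induct k)
  case 0 then show ?case using A by simp
next
  case (Suc k)
  have pk: "prd f n k \<in> carrier_mat n n" using prd_carrier f by blast
  have fk: "f k \<in> carrier_mat n n" by (rule f)
  have "A * prd f n (Suc k) = (A * f k) * prd f n k" using A pk fk by simp
  also have "\<dots> = f k * (A * prd f n k)" using A pk fk c[of k] by simp
  also have "\<dots> = prd f n (Suc k) * A" using A pk fk Suc by simp
  finally show ?case .
qed




lemma schur_ex:
  fixes B :: "complex mat"
  assumes B: "B \<in> carrier_mat n n"
  shows "\<exists>T P Q. similar_mat_wit B T P Q \<and> upper_triangular T \<and> T \<in> carrier_mat n n
     \<and> P \<in> carrier_mat n n \<and> Q \<in> carrier_mat n n \<and> P * Q = 1\<^sub>m n \<and> Q * P = 1\<^sub>m n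
     \<and> (\<forall>i<n. eigenvalue B (T $$ (i,i)))"
proof -
  obtain es where es: "char_poly B = (\<Prod> a \<leftarrow> es. [:- a, 1:])" "length es = n"
    using char_poly_factorized[OF B] by blast
  obtain T P Q where sd: "schur_decomposition B es = (T,P,Q)" by (cases "schur_decomposition B es") auto
  from schur_decomposition[OF B es(1) sd] have
    w: "similar_mat_wit B T P Q" and ut: "upper_triangular T" and dg: "diag_mat T = es" by auto
  note D = similar_mat_witD2[OF B w]
  have ev: "eigenvalue B (T $$ (i,i))" if i: "i < n" for i
  proof -
    have "T $$ (i,i) = es ! i" using dg i D(5) unfolding diag_mat_def
      by (metis (no_types, lifting) carrier_matD(1) diff_zero length_upt nth_map nth_upt add_0)
    then have mem: "T $$ (i,i) \<in> set es" using i es(2) by auto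
    have "poly (char_poly B) (T $$ (i,i)) = 0"
      unfolding es(1) poly_prod_list prod_list_zero_iff using mem by force
    then show ?thesis using eigenvalue_root_char_poly[OF B] by blast
  qed
  show ?thesis using w ut D ev by blast
qed

lemma common_eigvec:
  fixes B C :: "complex mat"
  assumes B: "B \<in> carrier_mat n n" and C: "C \<in> carrier_mat n n" and BC: "C * B = B * C"
    and ev: "eigenvector C v lam"
  shows "\<exists>u mu. eigenvector C u lam \<and> eigenvector B u mu"
proof -
  obtain T P Q where T: "similar_mat_wit B T P Q" "upper_triangular T" "T \<in> carrier_mat n n"
     "P \<in> carrier_mat n n" "Q \<in> carrier_mat n n" "P * Q = 1\<^sub>m n" "Q * P = 1\<^sub>m n"
    using schur_ex[OF B] by blast
  define mu where "mu k = T $$ (n - Suc k, n - Suc k)" for k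
  define g where "g k = char_matrix B (mu k)" for k
  define f where "f k = char_matrix T (mu k)" for k
  have gc: "\<And>k. g k \<in> carrier_mat n n" unfolding g_def using B by simp
  have pgc: "\<And>k. prd g n k \<in> carrier_mat n n" by (rule prd_carrier, rule gc)
  have fc: "\<And>k. f k \<in> carrier_mat n n" unfolding f_def using T by simp
  have "prd f n n = 0\<^sub>m n n"
    by (rule prd_tri_zero[OF fc], unfold f_def, insert char_matrix_ut[OF T(3) T(2)], auto simp: mu_def)
  moreover have "prd g n n = P * prd f n n * Q"
    by (rule prd_similar[OF _ gc fc T(4,5,6,7)], unfold g_def f_def, rule similar_mat_wit_char_matrix[OF T(1)])
  ultimately have g0: "prd g n n = 0\<^sub>m n n" using T by simp
  have v: "v \<in> carrier_vec n" "v \<noteq> 0\<^sub>v n" "C *\<^sub>v v = lam \<cdot>\<^sub>v v"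
    using ev C unfolding eigenvector_def by auto
  define vk where "vk k = prd g n k *\<^sub>v v" for k
  have vkc: "vk k \<in> carrier_vec n" for k unfolding vk_def using pgc v by (metis mult_mat_vec_carrier)
  have vkC: "C *\<^sub>v vk k = lam \<cdot>\<^sub>v vk k" for k
  proof -
    have cm: "C * prd g n k = prd g n k * C"
      by (rule comm_prd[OF C gc], unfold g_def, rule comm_char_matrix[OF C B BC])
    have "C *\<^sub>v vk k = (C * prd g n k) *\<^sub>v v" unfolding vk_def
      using C pgc v by (simp add: assoc_mult_mat_vec[of _ n n _ n])
    also have "\<dots> = prd g n k *\<^sub>v (C *\<^sub>v v)" unfolding cm
      using C pgc v by (simp add: assoc_mult_mat_vec[of _ n n _ n])
    also have "\<dots> = lam \<cdot>\<^sub>v vk k" unfolding vk_def v(3)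
      using pgc v by (simp add: mult_mat_vec[of _ n n])
    finally show ?thesis .
  qed
  have vS: "vk (Suc k) = g k *\<^sub>v vk k" for k
    unfolding vk_def using gc pgc v by (simp add: assoc_mult_mat_vec[of _ n n _ n])
  have "\<exists>k. vk k \<noteq> 0\<^sub>v n \<and> vk (Suc k) = 0\<^sub>v n"
  proof (rule ccontr)
    assume "\<not> ?thesis"
    then have st: "vk k \<noteq> 0\<^sub>v n \<Longrightarrow> vk (Suc k) \<noteq> 0\<^sub>v n" for k by blast
    have "vk k \<noteq> 0\<^sub>v n" for k
    proof (induct k)
      case 0 then show ?case using v unfolding vk_def by simp
    next
      case (Suc k) then show ?case using st by blast
    qed
    moreover have "vk n = 0\<^sub>v n" unfolding vk_def g0 using v by (intro eq_vecI) auto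
    ultimately show False by blast
  qed
  then obtain k where k: "vk k \<noteq> 0\<^sub>v n" "g k *\<^sub>v vk k = 0\<^sub>v n" using vS by metis
  have "eigenvector B (vk k) (mu k)"
    unfolding eigenvector_char_matrix[OF B] using k vkc unfolding g_def by blast
  moreover have "eigenvector C (vk k) lam"
    unfolding eigenvector_def using k vkc vkC C by auto
  ultimately show ?thesis by blast
qed




lemma ut_mult:
  fixes A B :: "'a::comm_ring_1 mat"
  assumes A: "A \<in> carrier_mat n n" and B: "B \<in> carrier_mat n n"
    and uA: "upper_triangular A" and uB: "upper_triangular B"
  shows "upper_triangular (A * B)" "\<And>i. i < n \<Longrightarrow> (A * B) $$ (i,i) = A $$ (i,i) * B $$ (i,i)"
proof -
  have e: "(A * B) $$ (i,j) = (\<Sum>l\<in>{0..<n}. A $$ (i,l) * B $$ (l,j))" if "i < n" "j < n" for i j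
    using A B that by (simp add: scalar_prod_def)
  have z: "A $$ (i,l) * B $$ (l,j) = 0" if "i < n" "l < n" "j < i" for i j l
  proof (cases "l < i")
    case True then have "A $$ (i,l) = 0" using uA A that by (auto intro: upper_triangularD)
    then show ?thesis by simp
  next
    case False then have "B $$ (l,j) = 0" using uB B that by (auto intro: upper_triangularD)
    then show ?thesis by simp
  qed
  show "upper_triangular (A * B)"
  proof (rule upper_triangularI)
    fix i j assume "j < i" "i < dim_row (A * B)"
    then show "(A * B) $$ (i,j) = 0" using A e[of i j] z[of i _ j] by (auto intro!: sum.neutral)
  qed
  fix i assume i: "i < n"
  have "(A * B) $$ (i,i) = A $$ (i,i) * B $$ (i,i) + (\<Sum>l\<in>{0..<n} - {i}. A $$ (i,l) * B $$ (l,i))"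
    unfolding e[OF i i] using i by (subst sum.remove[of _ i]) auto
  also have "(\<Sum>l\<in>{0..<n} - {i}. A $$ (i,l) * B $$ (l,i)) = 0"
  proof (rule sum.neutral, intro ballI)
    fix l assume l: "l \<in> {0..<n} - {i}"
    show "A $$ (i,l) * B $$ (l,i) = 0"
    proof (cases "l < i")
      case True then have "A $$ (i,l) = 0" using uA A i by (auto intro: upper_triangularD)
      then show ?thesis by simp
    next
      case False then have "i < l" using l by auto
      then have "B $$ (l,i) = 0" using uB B l by (auto intro: upper_triangularD)
      then show ?thesis by simp
    qed
  qed
  finally show "(A * B) $$ (i,i) = A $$ (i,i) * B $$ (i,i)" by simp
qed

lemma ut_pow:
  fixes T :: "'a::comm_ring_1 mat"
  assumes T: "T \<in> carrier_mat n n" and u: "upper_triangular T"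
  shows "upper_triangular (T ^\<^sub>m m) \<and> (\<forall>i<n. (T ^\<^sub>m m) $$ (i,i) = T $$ (i,i) ^ m)"
proof (induct m)
  case 0 then show ?case using T by (auto simp: upper_triangular_def)
next
  case (Suc m)
  have P: "T ^\<^sub>m m \<in> carrier_mat n n" using T by simp
  show ?case using ut_mult[OF P T _ u] Suc by (simp add: mult.commute)
qed

lemma inv_nonzero_ev:
  fixes M M2 :: "complex mat"
  assumes M: "M \<in> carrier_mat n n" and M2: "M2 \<in> carrier_mat n n" and MM: "M2 * M = 1\<^sub>m n"
    and ev: "eigenvector M v c"
  shows "c \<noteq> 0"
proof
  assume c: "c = 0"
  have v: "v \<in> carrier_vec n" "v \<noteq> 0\<^sub>v n" "M *\<^sub>v v = c \<cdot>\<^sub>v v" using ev M unfolding eigenvector_def by auto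
  have "v = (M2 * M) *\<^sub>v v" using MM v by simp
  also have "\<dots> = M2 *\<^sub>v (M *\<^sub>v v)" using M M2 v by (simp add: assoc_mult_mat_vec[of _ n n _ n])
  also have "M *\<^sub>v v = 0\<^sub>v n" using v c by (intro eq_vecI) auto
  also have "M2 *\<^sub>v 0\<^sub>v n = 0\<^sub>v n" using M2 by (intro eq_vecI) auto
  finally show False using v by simp
qed

lemma pow_cancel:
  fixes lam mu :: complex
  assumes "mu \<noteq> 0" "lam \<noteq> 0" "mu * lam ^ a = mu * lam ^ b" "a < b"
  shows "lam ^ (b - a) = 1"
proof -
  have "lam ^ b = lam ^ a * lam ^ (b - a)" using assms(4) by (simp add: power_add[symmetric])
  then have "lam ^ a * 1 = lam ^ a * lam ^ (b - a)" using assms(1,3) by simp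
  then show ?thesis using assms(2) by (metis mult_left_cancel power_not_zero)
qed

lemma root_unity:
  fixes A B C A2 B2 C2 :: "complex mat"
  assumes A: "A \<in> carrier_mat n n" and B: "B \<in> carrier_mat n n" and C: "C \<in> carrier_mat n n"
    and A2: "A2 \<in> carrier_mat n n" and B2: "B2 \<in> carrier_mat n n" and C2: "C2 \<in> carrier_mat n n"
    and AA: "A2 * A = 1\<^sub>m n" and BB: "B2 * B = 1\<^sub>m n" and CC: "C2 * C = 1\<^sub>m n"
    and BA: "B * A = A * C * B" and CA: "C * A = A * C" and CB: "C * B = B * C"
    and ev: "eigenvalue C lam"
  shows "lam ^ fact n = 1"
proof -
  obtain v where v: "eigenvector C v lam" using ev unfolding eigenvalue_def by blast
  obtain u mu where u: "eigenvector C u lam" "eigenvector B u mu"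
    using common_eigvec[OF B C CB v] by blast
  have lam0: "lam \<noteq> 0" by (rule inv_nonzero_ev[OF C C2 CC u(1)])
  have mu0: "mu \<noteq> 0" by (rule inv_nonzero_ev[OF B B2 BB u(2)])
  define uu where "uu j = ((*\<^sub>v) A ^^ j) u" for j
  have P: "uu j \<in> carrier_vec n \<and> uu j \<noteq> 0\<^sub>v n \<and> C *\<^sub>v uu j = lam \<cdot>\<^sub>v uu j
     \<and> B *\<^sub>v uu j = (mu * lam ^ j) \<cdot>\<^sub>v uu j" for j
  proof (induct j)
    case 0 then show ?case using u B C unfolding uu_def eigenvector_def by auto
  next
    case (Suc j)
    define w where "w = uu j"
    have w: "w \<in> carrier_vec n" "w \<noteq> 0\<^sub>v n" "C *\<^sub>v w = lam \<cdot>\<^sub>v w" "B *\<^sub>v w = (mu * lam ^ j) \<cdot>\<^sub>v w"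
      using Suc unfolding w_def by auto
    have S: "uu (Suc j) = A *\<^sub>v w" unfolding uu_def w_def by simp
    have c1: "A *\<^sub>v w \<in> carrier_vec n" using A w by simp
    have c2: "A *\<^sub>v w \<noteq> 0\<^sub>v n"
    proof
      assume h: "A *\<^sub>v w = 0\<^sub>v n"
      have "w = (A2 * A) *\<^sub>v w" using AA w by simp
      also have "\<dots> = A2 *\<^sub>v (A *\<^sub>v w)" using A A2 w by (simp add: assoc_mult_mat_vec[of _ n n _ n])
      also have "\<dots> = 0\<^sub>v n" unfolding h using A2 by (intro eq_vecI) auto
      finally show False using w by simp
    qed
    have c3: "C *\<^sub>v (A *\<^sub>v w) = lam \<cdot>\<^sub>v (A *\<^sub>v w)"
    proof -
      have "C *\<^sub>v (A *\<^sub>v w) = (C * A) *\<^sub>v w" using A C w by (simp add: assoc_mult_mat_vec[of _ n n _ n])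
      also have "\<dots> = A *\<^sub>v (C *\<^sub>v w)" unfolding CA using A C w by (simp add: assoc_mult_mat_vec[of _ n n _ n])
      also have "\<dots> = lam \<cdot>\<^sub>v (A *\<^sub>v w)" unfolding w(3) using A w by (simp add: mult_mat_vec[of _ n n])
      finally show ?thesis .
    qed
    have c4: "B *\<^sub>v (A *\<^sub>v w) = (mu * lam ^ Suc j) \<cdot>\<^sub>v (A *\<^sub>v w)"
    proof -
      have "B *\<^sub>v (A *\<^sub>v w) = (B * A) *\<^sub>v w" using A B w by (simp add: assoc_mult_mat_vec[of _ n n _ n])
      also have "\<dots> = A *\<^sub>v (C *\<^sub>v (B *\<^sub>v w))" unfolding BA using A B C w
        by (simp add: assoc_mult_mat_vec[of _ n n _ n])
      also have "\<dots> = (mu * lam ^ j) \<cdot>\<^sub>v (A *\<^sub>v (C *\<^sub>v w))" unfolding w(4) using A C w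
        by (simp add: mult_mat_vec[of _ n n])
      also have "\<dots> = (mu * lam ^ j) \<cdot>\<^sub>v (lam \<cdot>\<^sub>v (A *\<^sub>v w))" unfolding w(3) using A w
        by (simp add: mult_mat_vec[of _ n n])
      also have "\<dots> = (mu * lam ^ Suc j) \<cdot>\<^sub>v (A *\<^sub>v w)"
        by (simp add: smult_smult_assoc ac_simps)
      finally show ?thesis .
    qed
    show ?case unfolding S using c1 c2 c3 c4 by blast
  qed
  define R where "R = {x. poly (char_poly B) x = 0}"
  have cp: "char_poly B \<noteq> 0" using degree_monic_char_poly[OF B] by auto
  have finR: "finite R" unfolding R_def by (rule poly_roots_finite[OF cp])
  have cardR: "card R \<le> n" unfolding R_def using card_poly_roots_bound[OF cp] degree_monic_char_poly[OF B] by simp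
  have inR: "mu * lam ^ j \<in> R" for j
  proof -
    have "eigenvector B (uu j) (mu * lam ^ j)" unfolding eigenvector_def using P[of j] B by auto
    then have "eigenvalue B (mu * lam ^ j)" unfolding eigenvalue_def by blast
    then show ?thesis unfolding R_def using eigenvalue_root_char_poly[OF B] by blast
  qed
  have "\<not> inj_on (\<lambda>j. mu * lam ^ j) {0..n}"
  proof
    assume "inj_on (\<lambda>j. mu * lam ^ j) {0..n}"
    from card_inj_on_le[OF this _ finR] inR have "card {0..n} \<le> card R" by blast
    then show False using cardR by simp
  qed
  then obtain a b where ab: "a \<in> {0..n}" "b \<in> {0..n}" "a \<noteq> b" "mu * lam ^ a = mu * lam ^ b"
    unfolding inj_on_def by blast
  obtain d where d: "lam ^ d = 1" "0 < d" "d \<le> n"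
  proof (cases "a < b")
    case True then show ?thesis using that[of "b - a"] pow_cancel[OF mu0 lam0 ab(4) True] ab by auto
  next
    case False then have "b < a" using ab by auto
    then show ?thesis using that[of "a - b"] pow_cancel[OF mu0 lam0 ab(4)[symmetric]] ab by auto
  qed
  have "d dvd fact n" using d by (simp add: dvd_fact)
  then obtain q where "fact n = d * q" by blast
  then show ?thesis using d by (simp add: power_mult)
qed

lemma unipotent:
  fixes C :: "complex mat"
  assumes C: "C \<in> carrier_mat n n" and r: "\<And>lam. eigenvalue C lam \<Longrightarrow> lam ^ m = 1"
  shows "prd (\<lambda>_. char_matrix (C ^\<^sub>m m) 1) n n = 0\<^sub>m n n"
proof -
  obtain T P Q where T: "similar_mat_wit C T P Q" "upper_triangular T" "T \<in> carrier_mat n n"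
     "P \<in> carrier_mat n n" "Q \<in> carrier_mat n n" "P * Q = 1\<^sub>m n" "Q * P = 1\<^sub>m n"
     "\<forall>i<n. eigenvalue C (T $$ (i,i))"
    using schur_ex[OF C] by blast
  have Tm: "T ^\<^sub>m m \<in> carrier_mat n n" using T by simp
  note up = ut_pow[OF T(3) T(2), of m]
  have "prd (\<lambda>_. char_matrix (T ^\<^sub>m m) 1) n n = 0\<^sub>m n n"
    by (rule prd_tri_zero, insert Tm char_matrix_ut[OF Tm] up T(8) r, auto)
  moreover have "prd (\<lambda>_. char_matrix (C ^\<^sub>m m) 1) n n = P * prd (\<lambda>_. char_matrix (T ^\<^sub>m m) 1) n n * Q"
    by (rule prd_similar[OF _ _ _ T(4,5,6,7)], rule similar_mat_wit_char_matrix[OF similar_mat_wit_pow[OF T(1)]],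
        insert C Tm, auto)
  ultimately show ?thesis using T by simp
qed




context group begin

lemma comm_iff:
  assumes x: "x \<in> carrier G" and y: "y \<in> carrier G"
  shows "x \<otimes> y \<otimes> inv x \<otimes> inv y = \<one> \<longleftrightarrow> x \<otimes> y = y \<otimes> x"
proof -
  have "x \<otimes> y \<otimes> inv x \<otimes> inv y = (x \<otimes> y) \<otimes> inv (y \<otimes> x)"
    using x y by (simp add: inv_mult_group m_assoc)
  also have "\<dots> = \<one> \<longleftrightarrow> x \<otimes> y = \<one> \<otimes> (y \<otimes> x)"
    using x y by (intro inv_solve_right') auto
  finally show ?thesis using x y by simp
qed

lemma lower_central_sub:
  assumes H: "subgroup H G"
  shows "lower_central G H k \<subseteq> H"
proof (induct k)
  case 0 then show ?case by simp
next
  case (Suc k)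
  have "{x \<otimes> y \<otimes> inv x \<otimes> inv y | x y. x \<in> H \<and> y \<in> lower_central G H k} \<subseteq> H"
    using Suc H by (auto intro!: subgroup.m_closed subgroup.m_inv_closed)
  then show ?case unfolding lower_central.simps comm_subgroup_def
    by (rule generate_subgroup_incl[OF _ H])
qed

lemma gen_triv:
  assumes "generate G S = {\<one>}" shows "S \<subseteq> {\<one>}"
  using generate.incl[of _ S G] assms by blast

lemma gen_triv2:
  assumes "S \<subseteq> {\<one>}" shows "generate G S = {\<one>}"
  using generate_subgroup_incl[OF assms triv_subgroup] generate.one[of G S] by blast

lemma heis:
  assumes H: "subgroup H G" and nil: "nilpotent_subgroup G H" and na: "\<not> abelian_subset G H"
  shows "\<exists>x\<in>H. \<exists>y\<in>H. x \<otimes> y \<otimes> inv x \<otimes> inv y \<noteq> \<one> \<and> x \<otimes> y \<otimes> inv x \<otimes> inv y \<in> H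
     \<and> (\<forall>a\<in>H. a \<otimes> (x \<otimes> y \<otimes> inv x \<otimes> inv y) = (x \<otimes> y \<otimes> inv x \<otimes> inv y) \<otimes> a)"
proof -
  let ?L = "lower_central G H"
  have Hc: "H \<subseteq> carrier G" using H subgroup.subset by blast
  obtain n0 where "?L n0 = {\<one>}" using nil unfolding nilpotent_subgroup_def by blast
  then obtain n where n: "?L n = {\<one>}" and nmin: "\<And>m. m < n \<Longrightarrow> ?L m \<noteq> {\<one>}"
    using exists_least_iff[of "\<lambda>n. ?L n = {\<one>}"] by blast
  have n0: "n \<noteq> 0"
  proof
    assume "n = 0" then have "H = {\<one>}" using n by simp
    then show False using na unfolding abelian_subset_def by auto
  qed
  have n1: "n \<noteq> 1"
  proof
    assume "n = 1"
    then have "generate G {x \<otimes> y \<otimes> inv x \<otimes> inv y | x y. x \<in> H \<and> y \<in> H} = {\<one>}"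
      using n by (simp add: comm_subgroup_def)
    from gen_triv[OF this] have "\<forall>x\<in>H. \<forall>y\<in>H. x \<otimes> y \<otimes> inv x \<otimes> inv y = \<one>" by blast
    then have "abelian_subset G H" unfolding abelian_subset_def using comm_iff Hc by blast
    then show False using na by blast
  qed
  obtain k where k: "n = Suc (Suc k)" using n0 n1 by (metis One_nat_def not0_implies_Suc)
  have "?L (Suc k) \<noteq> {\<one>}" using nmin[of "Suc k"] k by linarith
  then have "\<not> {x \<otimes> y \<otimes> inv x \<otimes> inv y | x y. x \<in> H \<and> y \<in> ?L k} \<subseteq> {\<one>}"
    using gen_triv2 by (auto simp: comm_subgroup_def)
  then obtain x y where xy: "x \<in> H" "y \<in> ?L k" "x \<otimes> y \<otimes> inv x \<otimes> inv y \<noteq> \<one>" by blast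
  define z where "z = x \<otimes> y \<otimes> inv x \<otimes> inv y"
  have zL: "z \<in> ?L (Suc k)" unfolding z_def lower_central.simps comm_subgroup_def
    using xy by (auto intro: generate.incl)
  have yH: "y \<in> H" using xy lower_central_sub[OF H] by blast
  have zH: "z \<in> H" using zL lower_central_sub[OF H] by blast
  have comm: "a \<otimes> z = z \<otimes> a" if a: "a \<in> H" for a
  proof -
    have "a \<otimes> z \<otimes> inv a \<otimes> inv z \<in> ?L (Suc (Suc k))"
      unfolding lower_central.simps(2)[of G H "Suc k"] comm_subgroup_def
      using a zL by (auto intro: generate.incl)
    then have "a \<otimes> z \<otimes> inv a \<otimes> inv z = \<one>" using n k by simp
    then show ?thesis using comm_iff a zH Hc by blast
  qed
  show ?thesis using xy(1,3) yH zH comm unfolding z_def by blast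
qed

end



definition delta :: "'a \<Rightarrow> 'a \<Rightarrow> int" where
  "delta g = (\<lambda>x. if x = g then 1 else 0)"

primrec beta :: "('a, 'b) monoid_scheme \<Rightarrow> 'a \<Rightarrow> nat \<Rightarrow> ('a \<Rightarrow> int)" where
  "beta G w 0 = delta \<one>\<^bsub>G\<^esub>"
| "beta G w (Suc j) = grp_ring_add (grp_ring_mult G (delta w) (beta G w j)) (\<lambda>x. - beta G w j x)"

context group begin

lemma delta_carrier: "g \<in> carrier G \<Longrightarrow> delta g \<in> grp_ring_carrier G"
  unfolding grp_ring_carrier_def delta_def by auto

lemma one_delta: "grp_ring_one G = delta \<one>"
  unfolding grp_ring_one_def delta_def by simp

lemma mult_delta:
  assumes g: "g \<in> carrier G"
  shows "grp_ring_mult G (delta g) f = (\<lambda>x. if x \<in> carrier G then f (inv g \<otimes> x) else 0)"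
proof -
  have "{h. delta g h \<noteq> 0} = {g}" unfolding delta_def by auto
  then show ?thesis unfolding grp_ring_mult_def by (auto simp: delta_def)
qed

lemma delta_mult:
  assumes g: "g \<in> carrier G" and h: "h \<in> carrier G"
  shows "grp_ring_mult G (delta g) (delta h) = delta (g \<otimes> h)"
proof
  fix x
  show "grp_ring_mult G (delta g) (delta h) x = delta (g \<otimes> h) x"
  proof (cases "x \<in> carrier G")
    case True
    have "(inv g \<otimes> x = h) = (x = g \<otimes> h)" using g h True
      by (metis inv_solve_left)
    then show ?thesis unfolding mult_delta[OF g] using True by (simp add: delta_def)
  next
    case False
    then have "x \<noteq> g \<otimes> h" using g h by auto
    then show ?thesis unfolding mult_delta[OF g] using False by (simp add: delta_def)
  qed
qed

lemma shift_carrier: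
  assumes g: "g \<in> carrier G" and f: "f \<in> grp_ring_carrier G"
  shows "grp_ring_mult G (delta g) f \<in> grp_ring_carrier G"
proof -
  have "{x. grp_ring_mult G (delta g) f x \<noteq> 0} \<subseteq> (\<lambda>y. g \<otimes> y) ` {y. f y \<noteq> 0}"
  proof
    fix x assume "x \<in> {x. grp_ring_mult G (delta g) f x \<noteq> 0}"
    then have x: "x \<in> carrier G" "f (inv g \<otimes> x) \<noteq> 0" unfolding mult_delta[OF g] by (auto split: if_splits)
    have "x = g \<otimes> (inv g \<otimes> x)" using g x by (simp add: m_assoc[symmetric])
    then show "x \<in> (\<lambda>y. g \<otimes> y) ` {y. f y \<noteq> 0}" using x by blast
  qed
  moreover have "finite {y. f y \<noteq> 0}" using f unfolding grp_ring_carrier_def by blast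
  ultimately have "finite {x. grp_ring_mult G (delta g) f x \<noteq> 0}" by (meson finite_surj)
  then show ?thesis unfolding grp_ring_carrier_def mult_delta[OF g] by auto
qed

lemma neg_carrier: "f \<in> grp_ring_carrier G \<Longrightarrow> (\<lambda>x. - f x) \<in> grp_ring_carrier G"
  unfolding grp_ring_carrier_def by auto

lemma zero_carrier: "(\<lambda>x. 0) \<in> grp_ring_carrier G"
  unfolding grp_ring_carrier_def by auto

lemma beta_supp:
  assumes w: "w \<in> carrier G"
  shows "beta G w j x \<noteq> 0 \<Longrightarrow> \<exists>k\<le>j. x = w [^] k"
proof (induct j arbitrary: x)
  case 0 then show ?case by (auto simp: delta_def)
next
  case (Suc j)
  show ?case
  proof (cases "beta G w j x \<noteq> 0")
    case True then show ?thesis using Suc(1) by (meson le_Suc_eq)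
  next
    case False
    then have x: "x \<in> carrier G" "beta G w j (inv w \<otimes> x) \<noteq> 0" using Suc(2)
      by (auto simp: grp_ring_add_def mult_delta[OF w] split: if_splits)
    then obtain k where k: "k \<le> j" "inv w \<otimes> x = w [^] k" using Suc(1) by blast
    then have "x = w \<otimes> w [^] k" using w x by (metis inv_solve_left nat_pow_closed)
    then have "x = w [^] Suc k" using w by (metis nat_pow_Suc2)
    then show ?thesis using k by auto
  qed
qed

lemma beta_carrier:
  assumes w: "w \<in> carrier G"
  shows "beta G w j \<in> grp_ring_carrier G"
proof -
  have "{x. beta G w j x \<noteq> 0} \<subseteq> (\<lambda>k. w [^] k) ` {..j}" using beta_supp[OF w] by blast
  then have "finite {x. beta G w j x \<noteq> 0}" by (meson finite_surj finite_atMost)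
  moreover have "beta G w j x = 0" if "x \<notin> carrier G" for x
    using beta_supp[OF w, of j x] that w by auto
  ultimately show ?thesis unfolding grp_ring_carrier_def by blast
qed

lemma beta_top:
  assumes w: "w \<in> carrier G" and inj: "\<And>a b. a < b \<Longrightarrow> w [^] a \<noteq> w [^] (b::nat)"
  shows "beta G w j (w [^] j) = 1"
proof (induct j)
  case 0 then show ?case by (simp add: delta_def)
next
  case (Suc j)
  have "inv w \<otimes> w [^] Suc j = inv w \<otimes> (w \<otimes> w [^] j)" using w by (metis nat_pow_Suc2)
  also have "\<dots> = w [^] j" using w by (simp add: m_assoc[symmetric])
  finally have "inv w \<otimes> w [^] Suc j = w [^] j" .
  moreover have "beta G w j (w [^] Suc j) = 0"
  proof (rule ccontr)
    assume "beta G w j (w [^] Suc j) \<noteq> 0"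
    then obtain k where "k \<le> j" "w [^] Suc j = w [^] k" using beta_supp[OF w] by blast
    then show False using inj[of k "Suc j"] by auto
  qed
  ultimately show ?case using Suc w
    by (simp add: grp_ring_add_def mult_delta[OF w])
qed

end




theorem mainTheorem3:
  fixes G (structure)
  assumes "group G"
    and "\<exists>H. subgroup H G \<and> nilpotent_subgroup G H \<and> torsion_free_subgroup G H
              \<and> \<not> abelian_subset G H"
  shows "\<not> (\<exists>(N::nat) \<phi>. N \<ge> 1 \<and> grp_ring_mat_morphism G N \<phi>
                        \<and> inj_on \<phi> (grp_ring_carrier G))"
proof
  assume "\<exists>(N::nat) \<phi>. N \<ge> 1 \<and> grp_ring_mat_morphism G N \<phi> \<and> inj_on \<phi> (grp_ring_carrier G)"
  then obtain N \<phi> where M: "grp_ring_mat_morphism G N \<phi>" and inj: "inj_on \<phi> (grp_ring_carrier G)"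
    by blast
  interpret group G by fact
  obtain H where H: "subgroup H G" "nilpotent_subgroup G H" "torsion_free_subgroup G H"
      "\<not> abelian_subset G H" using assms(2) by blast
  have Hc: "H \<subseteq> carrier G" using H(1) subgroup.subset by blast
  obtain h g where hg: "h \<in> H" "g \<in> H" "h \<otimes> g \<otimes> inv h \<otimes> inv g \<noteq> \<one>" "h \<otimes> g \<otimes> inv h \<otimes> inv g \<in> H"
     "\<forall>a\<in>H. a \<otimes> (h \<otimes> g \<otimes> inv h \<otimes> inv g) = (h \<otimes> g \<otimes> inv h \<otimes> inv g) \<otimes> a"
    using heis[OF H(1,2,4)] by blast
  define z where "z = h \<otimes> g \<otimes> inv h \<otimes> inv g"
  have z: "z \<noteq> \<one>" "z \<in> H" "\<And>a. a \<in> H \<Longrightarrow> a \<otimes> z = z \<otimes> a" using hg unfolding z_def by auto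
  have hc: "h \<in> carrier G" and gc: "g \<in> carrier G" and zc: "z \<in> carrier G" using hg z Hc by auto
  have carr: "\<And>f. f \<in> grp_ring_carrier G \<Longrightarrow> \<phi> f \<in> carrier_mat N N"
   and add: "\<And>f k. f \<in> grp_ring_carrier G \<Longrightarrow> k \<in> grp_ring_carrier G \<Longrightarrow> \<phi> (grp_ring_add f k) = \<phi> f + \<phi> k"
   and mul: "\<And>f k. f \<in> grp_ring_carrier G \<Longrightarrow> k \<in> grp_ring_carrier G \<Longrightarrow> \<phi> (grp_ring_mult G f k) = \<phi> f * \<phi> k"
   and one: "\<phi> (grp_ring_one G) = 1\<^sub>m N"
    using M unfolding grp_ring_mat_morphism_def by auto
  define D where "D a = \<phi> (delta a)" for a
  have Dc: "\<And>a. a \<in> carrier G \<Longrightarrow> D a \<in> carrier_mat N N" unfolding D_def using carr delta_carrier by blast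
  have Dm: "\<And>a b. a \<in> carrier G \<Longrightarrow> b \<in> carrier G \<Longrightarrow> D (a \<otimes> b) = D a * D b"
    unfolding D_def using mul[OF delta_carrier delta_carrier] delta_mult by simp
  have D1: "D \<one> = 1\<^sub>m N" unfolding D_def using one one_delta by simp
  have Dpow: "\<And>a m. a \<in> carrier G \<Longrightarrow> D (a [^] (m::nat)) = D a ^\<^sub>m m"
  proof -
    fix a and m :: nat assume a: "a \<in> carrier G"
    show "D (a [^] m) = D a ^\<^sub>m m"
    proof (induct m)
      case 0 then show ?case using D1 Dc[OF a] by simp
    next
      case (Suc m) then show ?case using Dm[of "a [^] m" a] a by simp
    qed
  qed
  have phi0: "\<phi> (\<lambda>x. 0) = 0\<^sub>m N N"
  proof -
    have s0: "grp_ring_add (\<lambda>x. 0) (\<lambda>x. 0) = ((\<lambda>x. 0) :: 'a \<Rightarrow> int)" unfolding grp_ring_add_def by simp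
    have e: "\<phi> (\<lambda>x. 0) = \<phi> (\<lambda>x. 0) + \<phi> (\<lambda>x. 0)" using add[OF zero_carrier zero_carrier] unfolding s0 .
    have c: "\<phi> (\<lambda>x. 0) \<in> carrier_mat N N" using carr zero_carrier by blast
    show ?thesis
    proof (rule eq_matI)
      fix i j assume ij: "i < dim_row (0\<^sub>m N N)" "j < dim_col (0\<^sub>m N N)"
      have "\<phi> (\<lambda>x. 0) $$ (i,j) = (\<phi> (\<lambda>x. 0) + \<phi> (\<lambda>x. 0)) $$ (i,j)"
        by (simp only: e[symmetric])
      also have "\<dots> = \<phi> (\<lambda>x. 0) $$ (i,j) + \<phi> (\<lambda>x. 0) $$ (i,j)" using c ij by simp
      finally have "\<phi> (\<lambda>x. 0) $$ (i,j) = 0" by (simp only: add_cancel_right_right)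
      then show "\<phi> (\<lambda>x. 0) $$ (i,j) = 0\<^sub>m N N $$ (i,j)" using ij by simp
    qed (use c in auto)
  qed
  have phineg: "\<phi> (\<lambda>x. - f x) = (-1) \<cdot>\<^sub>m \<phi> f" if f: "f \<in> grp_ring_carrier G" for f
  proof -
    have "grp_ring_add f (\<lambda>x. - f x) = (\<lambda>x. 0)" unfolding grp_ring_add_def by simp
    then have e: "\<phi> f + \<phi> (\<lambda>x. - f x) = 0\<^sub>m N N" using add[OF f neg_carrier[OF f]] phi0 by simp
    have c1: "\<phi> f \<in> carrier_mat N N" using carr f by blast
    have c2: "\<phi> (\<lambda>x. - f x) \<in> carrier_mat N N" using carr neg_carrier[OF f] by blast
    show ?thesis
    proof (rule eq_matI)
      fix i j assume ij: "i < dim_row ((-1) \<cdot>\<^sub>m \<phi> f)" "j < dim_col ((-1) \<cdot>\<^sub>m \<phi> f)"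
      have "\<phi> f $$ (i,j) + \<phi> (\<lambda>x. - f x) $$ (i,j) = 0"
        using arg_cong[OF e, of "\<lambda>M. M $$ (i,j)"] c1 c2 ij by simp
      then show "\<phi> (\<lambda>x. - f x) $$ (i,j) = ((-1) \<cdot>\<^sub>m \<phi> f) $$ (i,j)" using ij c1
        by (simp add: add_eq_0_iff)
    qed (use c1 c2 in auto)
  qed
  define A where "A = D (inv h)"
  define B where "B = D g"
  define C where "C = D z"
  have AC: "A \<in> carrier_mat N N" "B \<in> carrier_mat N N" "C \<in> carrier_mat N N"
     "D h \<in> carrier_mat N N" "D (inv g) \<in> carrier_mat N N" "D (inv z) \<in> carrier_mat N N"
    unfolding A_def B_def C_def using Dc hc gc zc by auto
  have AA: "D h * A = 1\<^sub>m N" unfolding A_def using Dm[of h "inv h"] hc D1 by simp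
  have BB: "D (inv g) * B = 1\<^sub>m N" unfolding B_def using Dm[of "inv g" g] gc D1 by simp
  have CC: "D (inv z) * C = 1\<^sub>m N" unfolding C_def using Dm[of "inv z" z] zc D1 by simp
  have g0: "inv h \<otimes> z \<otimes> g = inv h \<otimes> (h \<otimes> (g \<otimes> inv h))" unfolding z_def using hc gc by (simp add: m_assoc)
  have g2: "inv h \<otimes> (h \<otimes> (g \<otimes> inv h)) = (inv h \<otimes> h) \<otimes> (g \<otimes> inv h)"
    using hc gc by (simp only: m_assoc inv_closed m_closed)
  have g1: "g \<otimes> inv h = inv h \<otimes> z \<otimes> g" unfolding g0 g2 using hc gc by simp
  have BA: "B * A = A * C * B"
  proof -
    have "B * A = D (g \<otimes> inv h)" unfolding A_def B_def using Dm[of g "inv h"] hc gc by simp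
    also have "\<dots> = D (inv h \<otimes> z \<otimes> g)" unfolding g1 ..
    also have "\<dots> = D (inv h \<otimes> z) * D g" using Dm[of "inv h \<otimes> z" g] hc gc zc by simp
    also have "\<dots> = A * C * B" unfolding A_def B_def C_def using Dm[of "inv h" z] hc zc by simp
    finally show ?thesis .
  qed
  have ihH: "inv h \<in> H" by (rule subgroup.m_inv_closed[OF H(1) hg(1)])
  have CA: "C * A = A * C"
  proof -
    have "C * A = D (z \<otimes> inv h)" unfolding A_def C_def using Dm[of z "inv h"] hc zc by simp
    also have "\<dots> = D (inv h \<otimes> z)" using z(3)[OF ihH] by simp
    also have "\<dots> = A * C" unfolding A_def C_def using Dm[of "inv h" z] hc zc by simp
    finally show ?thesis .
  qed
  have CB: "C * B = B * C"
  proof -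
    have "C * B = D (z \<otimes> g)" unfolding B_def C_def using Dm[of z g] gc zc by simp
    also have "\<dots> = D (g \<otimes> z)" using z(3)[OF hg(2)] by simp
    also have "\<dots> = B * C" unfolding B_def C_def using Dm[of g z] gc zc by simp
    finally show ?thesis .
  qed
  define m :: nat where "m = fact N"
  have ru: "\<And>lam. eigenvalue C lam \<Longrightarrow> lam ^ m = 1"
    unfolding m_def by (rule root_unity[OF AC AA BB CC BA CA CB])
  have uni: "prd (\<lambda>_. char_matrix (C ^\<^sub>m m) 1) N N = 0\<^sub>m N N" by (rule unipotent[OF AC(3) ru])
  define w where "w = z [^] m"
  have wc: "w \<in> carrier G" unfolding w_def using zc by simp
  have W: "D w = C ^\<^sub>m m" unfolding w_def C_def using Dpow zc by simp
  have injw: "w [^] a \<noteq> w [^] b" if ab: "a < (b::nat)" for a b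
  proof
    assume eq: "w [^] a = w [^] b"
    have e1: "w [^] b = w [^] a \<otimes> w [^] (b - a)" using wc ab by (simp add: nat_pow_mult)
    have "w [^] a \<otimes> \<one> = w [^] b" using eq wc by simp
    then have "w [^] a \<otimes> \<one> = w [^] a \<otimes> w [^] (b - a)" unfolding e1 .
    then have "w [^] (b - a) = \<one>" using wc by (metis l_cancel nat_pow_closed one_closed)
    then have "z [^] (m * (b - a)) = \<one>" unfolding w_def using zc by (simp add: nat_pow_pow)
    moreover have "m * (b - a) > 0" unfolding m_def using ab by simp
    ultimately have "z = \<one>" using H(3) z(2) unfolding torsion_free_subgroup_def by blast
    then show False using z(1) by blast
  qed
  have phib: "\<phi> (beta G w j) = prd (\<lambda>_. char_matrix (C ^\<^sub>m m) 1) N j" for j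
  proof (induct j)
    case 0 then show ?case using one one_delta by simp
  next
    case (Suc j)
    define M where "M = \<phi> (beta G w j)"
    have bc: "beta G w j \<in> grp_ring_carrier G" by (rule beta_carrier[OF wc])
    have Mc: "M \<in> carrier_mat N N" unfolding M_def using carr bc by blast
    have Wc: "C ^\<^sub>m m \<in> carrier_mat N N" using AC by simp
    have "\<phi> (beta G w (Suc j)) = D w * M + (-1) \<cdot>\<^sub>m M"
      unfolding beta.simps M_def D_def
      using add[OF shift_carrier[OF wc bc] neg_carrier[OF bc]] mul[OF delta_carrier[OF wc] bc] phineg[OF bc]
      by simp
    also have "\<dots> = char_matrix (C ^\<^sub>m m) 1 * M"
      unfolding char_matrix_def W using Wc Mc AC(3)
      by (simp add: add_mult_distrib_mat[of _ N N] mult_smult_assoc_mat[of _ N N _ N])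
    finally show ?case unfolding M_def Suc by simp
  qed
  have "\<phi> (beta G w N) = \<phi> (\<lambda>x. 0)" using phib uni phi0 by simp
  then have "beta G w N = (\<lambda>x. 0)" using inj beta_carrier[OF wc] zero_carrier by (meson inj_onD)
  moreover have "beta G w N (w [^] N) = 1" by (rule beta_top[OF wc injw])
  ultimately show False by simp
qed


end
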